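(* Let $(X,G)$ be a transitive continuous action and $m\in\mathbb{N}$, $m\geq 2$. Then $(X,G)$ is $m$-sensitive if and only if it is not almost $m$-equicontinuous; that is, exactly one of the two properties holds.
   Context: $G$ is a locally compact topological group acting continuously on a compact metric space $(X,d)$. $(X,G)$ is transitive if for any nonempty open $U,V\subset X$ there is $g\in G$ with $U\cap gV\neq\emptyset$. $(X,G)$ is $m$-sensitive if there exists $\varepsilon>0$ such that for every nonempty open $U\subset X$ there are distinct $x_1,\dots,x_m\in U$ and $g\in G$ with $d(gx_i,gx_j)\geq\varepsilon$ for all $i\neq j$. A point $x$ is an $m$-equicontinuity point if for every $\varepsilon>0$ there is $\delta>0$ such that for any $x_1,\dots,x_m$ in the open ball $B_\delta(x)$ and every $g\in G$ there exist $i\neq j$ with $d(gx_i,gx_j)<\varepsilon$; $E^m(X,G)$ is the set of such points, and $(X,G)$ is almost $m$-equicontinuous if $E^m(X,G)$ is residual in $X$. *)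

theory Defs
  imports "HOL-Analysis.Analysis"
begin

definition group_action :: "('g::group_add \<Rightarrow> 'x \<Rightarrow> 'x) \<Rightarrow> 'x set \<Rightarrow> bool" where
  "group_action act X \<longleftrightarrow>
     (\<forall>g x. x \<in> X \<longrightarrow> act g x \<in> X) \<and>
     (\<forall>x\<in>X. act 0 x = x) \<and>
     (\<forall>g h x. x \<in> X \<longrightarrow> act (g + h) x = act g (act h x))"

definition continuous_action ::
  "('g::{topological_space,group_add} \<Rightarrow> 'x::topological_space \<Rightarrow> 'x) \<Rightarrow> 'x set \<Rightarrow> bool" where
  "continuous_action act X \<longleftrightarrow>
     group_action act X \<and> continuous_on (UNIV \<times> X) (\<lambda>p. act (fst p) (snd p))"

definition transitive_action :: "('g \<Rightarrow> 'x::topological_space \<Rightarrow> 'x) \<Rightarrow> 'x set \<Rightarrow> bool" where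
  "transitive_action act X \<longleftrightarrow>
     (\<forall>U V. openin (top_of_set X) U \<and> U \<noteq> {} \<and> openin (top_of_set X) V \<and> V \<noteq> {}
        \<longrightarrow> (\<exists>g. U \<inter> act g ` V \<noteq> {}))"

definition m_sensitive :: "nat \<Rightarrow> ('g \<Rightarrow> 'x::metric_space \<Rightarrow> 'x) \<Rightarrow> 'x set \<Rightarrow> bool" where
  "m_sensitive m act X \<longleftrightarrow>
     (\<exists>\<epsilon>>0. \<forall>U. openin (top_of_set X) U \<and> U \<noteq> {} \<longrightarrow>
        (\<exists>xs :: nat \<Rightarrow> 'x. inj_on xs {..<m} \<and> xs ` {..<m} \<subseteq> U \<and>
           (\<exists>g. \<forall>i<m. \<forall>j<m. i \<noteq> j \<longrightarrow> dist (act g (xs i)) (act g (xs j)) \<ge> \<epsilon>)))"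

definition m_equicontinuity_point ::
  "nat \<Rightarrow> ('g \<Rightarrow> 'x::metric_space \<Rightarrow> 'x) \<Rightarrow> 'x set \<Rightarrow> 'x \<Rightarrow> bool" where
  "m_equicontinuity_point m act X x \<longleftrightarrow> x \<in> X \<and>
     (\<forall>\<epsilon>>0. \<exists>\<delta>>0. \<forall>xs :: nat \<Rightarrow> 'x. (\<forall>i<m. xs i \<in> ball x \<delta> \<inter> X) \<longrightarrow>
        (\<forall>g. \<exists>i<m. \<exists>j<m. i \<noteq> j \<and> dist (act g (xs i)) (act g (xs j)) < \<epsilon>))"

definition E_m :: "nat \<Rightarrow> ('g \<Rightarrow> 'x::metric_space \<Rightarrow> 'x) \<Rightarrow> 'x set \<Rightarrow> 'x set" where
  "E_m m act X = {x. m_equicontinuity_point m act X x}"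

definition residual_in :: "'x::topological_space set \<Rightarrow> 'x set \<Rightarrow> bool" where
  "residual_in E X \<longleftrightarrow>
     (\<exists>\<F>. countable \<F> \<and> (\<forall>U\<in>\<F>. openin (top_of_set X) U \<and> X \<subseteq> closure U) \<and>
          X \<inter> \<Inter>\<F> \<subseteq> E)"

definition almost_m_equicontinuous :: "nat \<Rightarrow> ('g \<Rightarrow> 'x::metric_space \<Rightarrow> 'x) \<Rightarrow> 'x set \<Rightarrow> bool" where
  "almost_m_equicontinuous m act X \<longleftrightarrow> residual_in (E_m m act X) X"

end

theory Submission
  imports Defs
begin

lemma baire_cpt:
  fixes X :: "'x::metric_space set"
  assumes "compact X" "X \<noteq> {}" "countable F" "\<forall>U\<in>F. openin (top_of_set X) U \<and> X \<subseteq> closure U"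
  shows "X \<inter> \<Inter>F \<noteq> {}"
proof -
  have r: "regular_space (top_of_set X)"
    by (simp add: regular_space_subtopology regular_space_euclidean)
  have lc: "locally_compact_space (top_of_set X)"
    by (simp add: assms(1) compact_imp_locally_compact_space compact_space_subtopology)
  have "(top_of_set X) closure_of \<Inter>F = topspace (top_of_set X)"
  proof (rule Baire_category)
    show "completely_metrizable_space (top_of_set X) \<or> locally_compact_space (top_of_set X) \<and> regular_space (top_of_set X)" using r lc by blast
    show "countable F" by fact
    fix T assume "T \<in> F"
    then have o: "openin (top_of_set X) T" and d: "X \<subseteq> closure T" using assms(4) by auto
    then have "T \<subseteq> X" by (meson openin_imp_subset)
    then show "openin (top_of_set X) T \<and> top_of_set X closure_of T = topspace (top_of_set X)"
      using o d by (auto simp: closure_of_subtopology Int_absorb1 closure_subset closure_mono)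
  qed
  then show ?thesis using assms(2) by (auto simp add: closure_of_subtopology)
qed

lemma act_cont:
  assumes "continuous_action act X"
  shows "continuous_on X (act h)"
proof -
  have c: "continuous_on (UNIV \<times> X) (\<lambda>p. act (fst p) (snd p))"
    using assms by (simp add: continuous_action_def)
  have A: "continuous_on X (\<lambda>x. (h, x))" by (intro continuous_intros)
  have B: "continuous_on ((\<lambda>x. (h, x)) ` X) (\<lambda>p. act (fst p) (snd p))"
    using c by (rule continuous_on_subset) auto
  have "continuous_on X ((\<lambda>p. act (fst p) (snd p)) \<circ> (\<lambda>x. (h, x)))"
    by (rule continuous_on_compose[OF A B])
  then show ?thesis by (simp add: o_def)
qed

theorem theorem4p9:
  fixes act :: "'g::{topological_group_add, t2_space} \<Rightarrow> 'x::metric_space \<Rightarrow> 'x"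
    and X :: "'x set" and m :: nat
  assumes "locally_compact_space (euclidean :: 'g topology)"
    and "compact X" and "X \<noteq> {}"
    and "continuous_action act X"
    and "transitive_action act X"
    and "m \<ge> 2"
  shows "m_sensitive m act X \<longleftrightarrow> \<not> almost_m_equicontinuous m act X"
proof
  have ga: "group_action act X" using assms(4) by (simp add: continuous_action_def)
  then have inX: "\<And>g x. x \<in> X \<Longrightarrow> act g x \<in> X"
    and a0: "\<And>x. x \<in> X \<Longrightarrow> act 0 x = x"
    and aplus: "\<And>g h x. x \<in> X \<Longrightarrow> act (g + h) x = act g (act h x)"
    by (auto simp: group_action_def)
  {
    assume sens: "m_sensitive m act X"
    then obtain \<epsilon> where ep: "\<epsilon> > 0" and sU': "\<forall>U. openin (top_of_set X) U \<and> U \<noteq> {} \<longrightarrow>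
        (\<exists>xs :: nat \<Rightarrow> 'x. inj_on xs {..<m} \<and> xs ` {..<m} \<subseteq> U \<and>
           (\<exists>g. \<forall>i<m. \<forall>j<m. i \<noteq> j \<longrightarrow> dist (act g (xs i)) (act g (xs j)) \<ge> \<epsilon>))"
      unfolding m_sensitive_def by (elim exE conjE) (rule that)
    have sU: "\<exists>xs :: nat \<Rightarrow> 'x. inj_on xs {..<m} \<and> xs ` {..<m} \<subseteq> U \<and>
           (\<exists>g. \<forall>i<m. \<forall>j<m. i \<noteq> j \<longrightarrow> dist (act g (xs i)) (act g (xs j)) \<ge> \<epsilon>)"
      if "openin (top_of_set X) U" "U \<noteq> {}" for U
      using sU' that by simp
    have Eempty: "E_m m act X = {}"
    proof (rule ccontr)
      assume "E_m m act X \<noteq> {}"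
      then obtain x where x: "m_equicontinuity_point m act X x" by (auto simp: E_m_def)
      then have xX: "x \<in> X" by (simp add: m_equicontinuity_point_def)
      from x ep obtain \<delta> where dp: "\<delta> > 0" and eq: "\<And>xs. (\<forall>i<m. xs i \<in> ball x \<delta> \<inter> X) \<Longrightarrow>
        (\<forall>g. \<exists>i<m. \<exists>j<m. i \<noteq> j \<and> dist (act g (xs i)) (act g (xs j)) < \<epsilon>)"
        unfolding m_equicontinuity_point_def by blast
      have "openin (top_of_set X) (ball x \<delta> \<inter> X)"
        using openin_open_Int[of "ball x \<delta>" X] by (simp add: Int_commute)
      moreover have "x \<in> ball x \<delta> \<inter> X" using xX dp by simp
      then have "ball x \<delta> \<inter> X \<noteq> {}" by blast
      ultimately have "\<exists>xs :: nat \<Rightarrow> 'x. inj_on xs {..<m} \<and> xs ` {..<m} \<subseteq> ball x \<delta> \<inter> X \<and>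
           (\<exists>g. \<forall>i<m. \<forall>j<m. i \<noteq> j \<longrightarrow> dist (act g (xs i)) (act g (xs j)) \<ge> \<epsilon>)"
        by (rule sU)
      then obtain xs g where xs: "xs ` {..<m} \<subseteq> ball x \<delta> \<inter> X"
        and d: "\<forall>i<m. \<forall>j<m. i \<noteq> j \<longrightarrow> dist (act g (xs i)) (act g (xs j)) \<ge> \<epsilon>"
        by blast
      from xs have "\<forall>i<m. xs i \<in> ball x \<delta> \<inter> X" by auto
      from eq[OF this] obtain i j where ij: "i < m" "j < m" "i \<noteq> j"
        "dist (act g (xs i)) (act g (xs j)) < \<epsilon>"
        by blast
      from d ij(1-3) have "dist (act g (xs i)) (act g (xs j)) \<ge> \<epsilon>" by blast
      with ij(4) show False by linarith
    qed
    show "\<not> almost_m_equicontinuous m act X"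
    proof
      assume "almost_m_equicontinuous m act X"
      then obtain F where F: "countable F" "\<forall>U\<in>F. openin (top_of_set X) U \<and> X \<subseteq> closure U"
        "X \<inter> \<Inter>F \<subseteq> E_m m act X"
        unfolding almost_m_equicontinuous_def residual_in_def by blast
      from F(1,2) have "X \<inter> \<Inter>F \<noteq> {}" by (intro baire_cpt[OF assms(2,3)])
      with \<open>X \<inter> \<Inter>F \<subseteq> E_m m act X\<close> Eempty show False by blast
    qed
  }
  assume nae: "\<not> almost_m_equicontinuous m act X"
  show "m_sensitive m act X"
  proof (rule ccontr)
    assume ns: "\<not> m_sensitive m act X"
    define good where "good (\<epsilon>::real) U \<longleftrightarrow> (\<forall>xs. inj_on xs {..<m} \<and> xs ` {..<m} \<subseteq> U \<longrightarrow>
        (\<forall>g. \<exists>i<m. \<exists>j<m. i \<noteq> j \<and> dist (act g (xs i)) (act g (xs j)) < \<epsilon>))" for \<epsilon> U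
    have ex: "\<exists>U. openin (top_of_set X) U \<and> U \<noteq> {} \<and> good \<epsilon> U" if "\<epsilon> > 0" for \<epsilon>
    proof (rule ccontr)
      assume nU: "\<not> (\<exists>U. openin (top_of_set X) U \<and> U \<noteq> {} \<and> good \<epsilon> U)"
      have h: "\<forall>U. openin (top_of_set X) U \<and> U \<noteq> {} \<longrightarrow>
        (\<exists>xs :: nat \<Rightarrow> 'x. inj_on xs {..<m} \<and> xs ` {..<m} \<subseteq> U \<and>
           (\<exists>g. \<forall>i<m. \<forall>j<m. i \<noteq> j \<longrightarrow> dist (act g (xs i)) (act g (xs j)) \<ge> \<epsilon>))"
      proof (intro allI impI)
        fix U assume UU: "openin (top_of_set X) U \<and> U \<noteq> {}"
        with nU have "\<not> good \<epsilon> U" by blast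
        then obtain xs g where xs: "inj_on xs {..<m} \<and> xs ` {..<m} \<subseteq> U"
          and ng: "\<not> (\<exists>i<m. \<exists>j<m. i \<noteq> j \<and> dist (act g (xs i)) (act g (xs j)) < \<epsilon>)"
          unfolding good_def by blast
        have "\<forall>i<m. \<forall>j<m. i \<noteq> j \<longrightarrow> dist (act g (xs i)) (act g (xs j)) \<ge> \<epsilon>"
        proof (intro allI impI)
          fix i j assume "i < m" "j < m" "i \<noteq> j"
          with ng have "\<not> dist (act g (xs i)) (act g (xs j)) < \<epsilon>" by blast
          then show "dist (act g (xs i)) (act g (xs j)) \<ge> \<epsilon>" by simp
        qed
        with xs show "\<exists>xs :: nat \<Rightarrow> 'x. inj_on xs {..<m} \<and> xs ` {..<m} \<subseteq> U \<and>
           (\<exists>g. \<forall>i<m. \<forall>j<m. i \<noteq> j \<longrightarrow> dist (act g (xs i)) (act g (xs j)) \<ge> \<epsilon>)"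
          by blast
      qed
      have "m_sensitive m act X" unfolding m_sensitive_def
        by (rule exI[of _ \<epsilon>]) (rule conjI[OF that h])
      with ns show False by contradiction
    qed
    define En where "En (n::nat) = \<Union>{W. openin (top_of_set X) W \<and> good (inverse (real (Suc n))) W}" for n
    have Eopen: "openin (top_of_set X) (En n)" for n
      unfolding En_def by (rule openin_Union) simp
    have Edense: "X \<subseteq> closure (En n)" for n
    proof
      fix x assume xX: "x \<in> X"
      show "x \<in> closure (En n)"
        unfolding closure_approachable
      proof (intro allI impI)
        fix e :: real assume e: "e > 0"
        obtain U where U: "openin (top_of_set X) U" "U \<noteq> {}" "good (inverse (real (Suc n))) U"
          using ex[of "inverse (real (Suc n))"] by auto
        define V where "V = ball x e \<inter> X"
        have V: "openin (top_of_set X) V" "V \<noteq> {}"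
        proof -
          show "openin (top_of_set X) V"
            using openin_open_Int[of "ball x e" X] by (simp add: V_def Int_commute)
          have "x \<in> V" using xX e by (simp add: V_def)
          then show "V \<noteq> {}" by blast
        qed
        obtain g where "V \<inter> act g ` U \<noteq> {}"
          using assms(5) U V unfolding transitive_action_def by blast
        then obtain u where uU: "u \<in> U" and uV: "act g u \<in> V" by auto
        have UX: "U \<subseteq> X" using U(1) by (meson openin_imp_subset)
        define W where "W = V \<inter> (X \<inter> act (-g) -` U)"
        have "openin (top_of_set X) (X \<inter> act (-g) -` U)"
        proof (rule continuous_openin_preimage[OF act_cont[OF assms(4)] _ U(1)])
          show "act (- g) \<in> X \<rightarrow> X" using inX by blast
        qed
        then have Wo: "openin (top_of_set X) W" using V(1) unfolding W_def by (rule openin_Int[rotated])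
        have uX: "u \<in> X" using uU UX by auto
        have inv1: "act (-g) (act g z) = z" if "z \<in> X" for z
          using aplus[OF that, of "-g" g] a0[OF that] by simp
        have inv2: "act g (act (-g) z) = z" if "z \<in> X" for z
          using aplus[OF that, of g "-g"] a0[OF that] by simp
        have yW: "act g u \<in> W" unfolding W_def using uV inX[OF uX] inv1[OF uX] uU by auto
        have Wg: "good (inverse (real (Suc n))) W"
          unfolding good_def
        proof (intro allI impI)
          fix xs :: "nat \<Rightarrow> 'x" and h
          assume a: "inj_on xs {..<m} \<and> xs ` {..<m} \<subseteq> W"
          define ys where "ys = (\<lambda>i. act (-g) (xs i))"
          have xsX: "\<And>i. i < m \<Longrightarrow> xs i \<in> X" using a unfolding W_def by auto
          have ysU: "ys ` {..<m} \<subseteq> U" using a unfolding W_def ys_def by auto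
          have bk: "\<And>i. i < m \<Longrightarrow> act g (ys i) = xs i" using inv2 xsX ys_def by simp
          have "inj_on ys {..<m}"
            unfolding inj_on_def
          proof (intro ballI impI)
            fix i j assume "i \<in> {..<m}" "j \<in> {..<m}" "ys i = ys j"
            then have "xs i = xs j" using bk by (metis lessThan_iff)
            then show "i = j" using a \<open>i \<in> {..<m}\<close> \<open>j \<in> {..<m}\<close> by (simp add: inj_on_def)
          qed
          with U(3) ysU obtain i j where ij: "i < m" "j < m" "i \<noteq> j"
            "dist (act (h + g) (ys i)) (act (h + g) (ys j)) < inverse (real (Suc n))"
            unfolding good_def by blast
          have "ys i \<in> X" "ys j \<in> X" using ysU UX ij by auto
          then have "act (h + g) (ys i) = act h (xs i)" "act (h + g) (ys j) = act h (xs j)"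
            using aplus bk ij by auto
          then show "\<exists>i<m. \<exists>j<m. i \<noteq> j \<and> dist (act h (xs i)) (act h (xs j)) < inverse (real (Suc n))"
            using ij by metis
        qed
        have "act g u \<in> En n" unfolding En_def using Wo Wg yW by blast
        moreover have "dist (act g u) x < e" using uV by (simp add: V_def dist_commute)
        ultimately show "\<exists>y\<in>En n. dist y x < e" by blast
      qed
    qed
    have sub: "X \<inter> \<Inter>(range En) \<subseteq> E_m m act X"
    proof
      fix x assume x: "x \<in> X \<inter> \<Inter>(range En)"
      show "x \<in> E_m m act X"
        unfolding E_m_def m_equicontinuity_point_def mem_Collect_eq
      proof (intro conjI allI impI)
        show "x \<in> X" using x by auto
        fix \<epsilon> :: real assume "\<epsilon> > 0"
        then obtain n where n: "inverse (real (Suc n)) < \<epsilon>" using reals_Archimedean by blast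
        from x have "x \<in> En n" by auto
        then obtain W where W: "openin (top_of_set X) W" "good (inverse (real (Suc n))) W" "x \<in> W"
          unfolding En_def by blast
        then obtain \<delta> where dp: "\<delta> > 0" "ball x \<delta> \<inter> X \<subseteq> W"
          by (meson openin_contains_ball)
        show "\<exists>\<delta>>0. \<forall>xs. (\<forall>i<m. xs i \<in> ball x \<delta> \<inter> X) \<longrightarrow>
             (\<forall>g. \<exists>i<m. \<exists>j<m. i \<noteq> j \<and> dist (act g (xs i)) (act g (xs j)) < \<epsilon>)"
        proof (rule exI[of _ \<delta>], intro conjI allI impI)
          show "\<delta> > 0" by fact
          fix xs :: "nat \<Rightarrow> 'x" and g
          assume xs: "\<forall>i<m. xs i \<in> ball x \<delta> \<inter> X"
          show "\<exists>i<m. \<exists>j<m. i \<noteq> j \<and> dist (act g (xs i)) (act g (xs j)) < \<epsilon>"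
          proof (cases "inj_on xs {..<m}")
            case True
            have "xs ` {..<m} \<subseteq> W" using xs dp(2) by auto
            with True W(2) obtain i j where "i<m" "j<m" "i \<noteq> j"
              "dist (act g (xs i)) (act g (xs j)) < inverse (real (Suc n))"
              unfolding good_def by blast
            then show ?thesis using n by force
          next
            case False
            then obtain i j where "i<m" "j<m" "i \<noteq> j" "xs i = xs j"
              unfolding inj_on_def by auto
            then show ?thesis using \<open>\<epsilon> > 0\<close> by force
          qed
        qed
      qed
    qed
    have "almost_m_equicontinuous m act X"
      unfolding almost_m_equicontinuous_def residual_in_def
    proof (intro exI[of _ "range En"] conjI)
      show "countable (range En)" by simp
      show "\<forall>U\<in>range En. openin (top_of_set X) U \<and> X \<subseteq> closure U"
        using Eopen Edense by blast
      show "X \<inter> \<Inter>(range En) \<subseteq> E_m m act X" by (rule sub)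
    qed
    with nae show False by blast
  qed
qed

end
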